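(* Let $r\geq 3$ and let $G_1$ be the pan graph with vertex set $\{u_0,u_1,\dots,u_r\}$ and edge set $$E(G_1)=\{u_0u_r,\ u_1u_2,\ u_{r-1}u_r\}\cup\{u_ju_{j+2}: 1\le j\le r-2\}$$ (so $u_1,\dots,u_r$ span a cycle of length $r$ and $u_0$ is a pendant vertex attached to $u_r$). Let $H_0,H_1,\dots,H_r$ be connected graphs, each with at least two vertices, with $n_i=|V(H_i)|$, ordered so that $n_0\le n_1\le\dots\le n_r$. Let $\Gamma=G_1\diamond(H_0,H_1,\dots,H_r)$ be the generalized edge corona in which every vertex of $H_0$ is joined to $u_0$ and $u_r$, every vertex of $H_1$ is joined to $u_1$ and $u_2$, for each $j\in\{1,\dots,r-2\}$ every vertex of $H_{j+1}$ is joined to $u_j$ and $u_{j+2}$, and every vertex of $H_r$ is joined to $u_{r-1}$ and $u_r$. Suppose that (a) $\Delta(H_0)<\delta(H_1)$; (b) $\Delta(H_i)\le\delta(H_{i+1})$ for all $i\in\{1,\dots,r-1\}$; (c) $d'(u_0)\le\delta'(H_i)$ for all $i\in\{0,1,\dots,r\}$; (d) $\Delta'(H_r)\le d'(u_1)$. Then $\Gamma$ is antimagic.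
   Context: All graphs are simple and undirected. A graph $G$ is antimagic if there is a bijection $f:E(G)\to\{1,2,\dots,|E(G)|\}$ such that the vertex sums $w(v)=\sum_{e\ni v}f(e)$ are pairwise distinct over all vertices $v$. For a graph $G$ with $m$ edges $e_1,\dots,e_m$ and graphs $H_1,\dots,H_m$, the generalized edge corona $G\diamond(H_1,\dots,H_m)$ is obtained from disjoint copies of $G,H_1,\dots,H_m$ by joining both end vertices of $e_i$ to every vertex of $H_i$, for each $i$. $\Delta(H)$ and $\delta(H)$ denote the maximum and minimum degree of $H$ itself. For a vertex $v$ of $\Gamma$, $d'(v)$ denotes its degree in $\Gamma$; $\Delta'(H_i)$ and $\delta'(H_i)$ denote the maximum and minimum of $d'(v)$ over $v\in V(H_i)$ (so $d'(v)=\deg_{H_i}(v)+2$ for $v\in V(H_i)$). *)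

theory Defs
  imports Main
begin

definition simple_graph :: "'a set \<Rightarrow> 'a set set \<Rightarrow> bool" where
  "simple_graph V E \<longleftrightarrow> finite V \<and> (\<forall>e\<in>E. e \<subseteq> V \<and> card e = 2)"

definition adj_rel :: "'a set set \<Rightarrow> ('a \<times> 'a) set" where
  "adj_rel E = {(x, y). {x, y} \<in> E}"

definition connected_graph :: "'a set \<Rightarrow> 'a set set \<Rightarrow> bool" where
  "connected_graph V E \<longleftrightarrow> (\<forall>x\<in>V. \<forall>y\<in>V. (x, y) \<in> (adj_rel E)\<^sup>*)"

definition degree :: "'a set set \<Rightarrow> 'a \<Rightarrow> nat" where
  "degree E v = card {e \<in> E. v \<in> e}"

definition max_degree :: "'a set \<Rightarrow> 'a set set \<Rightarrow> nat" where
  "max_degree V E = Max (degree E ` V)"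

definition min_degree :: "'a set \<Rightarrow> 'a set set \<Rightarrow> nat" where
  "min_degree V E = Min (degree E ` V)"

definition antimagic :: "'a set \<Rightarrow> 'a set set \<Rightarrow> bool" where
  "antimagic V E \<longleftrightarrow> (\<exists>f :: 'a set \<Rightarrow> nat. bij_betw f E {1..card E} \<and>
      inj_on (\<lambda>v. \<Sum>e\<in>{e \<in> E. v \<in> e}. f e) V)"

text \<open>The base graph G has vertices VG, edges EG, and the
  edges are indexed by I via ed (ed i is the i-th edge); H i = (VH i, EH i) is attached
  to edge ed i.\<close>
definition corona_V :: "'b set \<Rightarrow> 'i set \<Rightarrow> ('i \<Rightarrow> 'a set) \<Rightarrow> ('b + 'i \<times> 'a) set" where
  "corona_V VG I VH = Inl ` VG \<union> {Inr (i, x) | i x. i \<in> I \<and> x \<in> VH i}"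

definition corona_E :: "'b set set \<Rightarrow> 'i set \<Rightarrow> ('i \<Rightarrow> 'b set) \<Rightarrow> ('i \<Rightarrow> 'a set)
    \<Rightarrow> ('i \<Rightarrow> 'a set set) \<Rightarrow> ('b + 'i \<times> 'a) set set" where
  "corona_E EG I ed VH EH =
     (image Inl) ` EG
     \<union> {(\<lambda>x. Inr (i, x)) ` e | i e. i \<in> I \<and> e \<in> EH i}
     \<union> {{Inl u, Inr (i, x)} | i u x. i \<in> I \<and> u \<in> ed i \<and> x \<in> VH i}"

text \<open>The pan graph G1 on vertices u_0..u_r (u_k represented by k).\<close>
definition pan_V :: "nat \<Rightarrow> nat set" where
  "pan_V r = {0..r}"

definition pan_E :: "nat \<Rightarrow> nat set set" where
  "pan_E r = {{0, r}, {1, 2}, {r - 1, r}} \<union> {{j, j + 2} | j. 1 \<le> j \<and> j \<le> r - 2}"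

text \<open>The edge to which H_i is attached.\<close>
definition pan_edge :: "nat \<Rightarrow> nat \<Rightarrow> nat set" where
  "pan_edge r i = (if i = 0 then {0, r} else if i = 1 then {1, 2}
                   else if i = r then {r - 1, r} else {i - 1, i + 1})"

end

theory Submission
  imports Defs
begin

lemma sum_lt_blocks:
  fixes g :: "'e \<Rightarrow> nat"
  assumes fx: "finite X" and fy: "finite Y" and ne: "X \<noteq> {}" and cxy: "card X \<le> card Y"
    and lt: "\<And>a b. a \<in> X \<Longrightarrow> b \<in> Y \<Longrightarrow> g a < g b"
  shows "sum g X < sum g Y"
proof -
  define M where "M = Max (g ` X)"
  have M: "\<And>a. a \<in> X \<Longrightarrow> g a \<le> M" using fx by (simp add: M_def)
  have "M \<in> g ` X" using fx ne by (simp add: M_def)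
  then obtain a0 where a0: "a0 \<in> X" "M = g a0" by auto
  have M2: "\<And>b. b \<in> Y \<Longrightarrow> M + 1 \<le> g b" using lt a0 by force
  have c1: "card X \<ge> 1" using fx ne by (simp add: Suc_leI card_gt_0_iff)
  have "sum g X \<le> card X * M" using sum_bounded_above[of X g M] M by simp
  also have "\<dots> \<le> card Y * M" using cxy by simp
  also have "\<dots> < card Y * (M + 1)" using cxy c1 by simp
  also have "\<dots> \<le> sum g Y" using sum_bounded_below[of Y "M+1" g] M2 by (simp add: mult.commute)
  finally show ?thesis .
qed

lemma sum_le_blocks:
  fixes g :: "'e \<Rightarrow> nat"
  assumes fx: "finite X" and fy: "finite Y" and cxy: "card X \<le> card Y"
    and lt: "\<And>a b. a \<in> X \<Longrightarrow> b \<in> Y \<Longrightarrow> g a < g b"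
  shows "sum g X \<le> sum g Y"
proof (cases "X = {}")
  case False
  show ?thesis using sum_lt_blocks[of X Y g] fx fy cxy lt False by fastforce
qed simp

lemma sum_lt_exchange:
  fixes g :: "'e \<Rightarrow> nat"
  assumes fc: "finite C" and fd: "finite D" and ne: "C - D \<noteq> {}" and cc: "card C \<le> card D"
    and lt: "\<And>a b. a \<in> C - D \<Longrightarrow> b \<in> D - C \<Longrightarrow> g a < g b"
  shows "sum g C < sum g D"
proof -
  have "card C = card (C \<inter> D) + card (C - D)" using fc card_Int_Diff by blast
  moreover have "card D = card (D \<inter> C) + card (D - C)" using fd card_Int_Diff by blast
  ultimately have "card (C - D) \<le> card (D - C)" using cc by (simp add: Int_commute)
  then have "sum g (C - D) < sum g (D - C)"
    using sum_lt_blocks[of "C - D" "D - C" g] lt ne fc fd by blast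
  moreover have "sum g C = sum g (C \<inter> D) + sum g (C - D)" using fc sum.Int_Diff by blast
  moreover have "sum g D = sum g (D \<inter> C) + sum g (D - C)" using fd sum.Int_Diff by blast
  ultimately show ?thesis by (simp add: Int_commute)
qed

lemma mono_bij_exists:
  fixes key :: "'x \<Rightarrow> 'k::linorder" and L :: "nat set"
  assumes "finite X" "finite L" "card X = card L"
  shows "\<exists>\<tau>. bij_betw \<tau> X L \<and> (\<forall>x\<in>X. \<forall>y\<in>X. key x < key y \<longrightarrow> \<tau> x < \<tau> y)"
  using assms
proof (induction "card X" arbitrary: X L)
  case 0
  then have "X = {}" "L = {}" by auto
  then show ?case by (auto simp: bij_betw_def)
next
  case (Suc n)
  then have Xne: "X \<noteq> {}" and Lne: "L \<noteq> {}" by auto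
  have "Max (key ` X) \<in> key ` X" using Suc.prems Xne by simp
  then obtain x0 where x0: "x0 \<in> X" "key x0 = Max (key ` X)" by auto
  have x0max: "\<And>y. y \<in> X \<Longrightarrow> key y \<le> key x0" using x0 Suc.prems by simp
  define m0 where "m0 = Max L"
  have m0: "m0 \<in> L" using Lne Suc.prems by (simp add: m0_def)
  have m0max: "\<And>l. l \<in> L \<Longrightarrow> l \<le> m0" using Suc.prems by (simp add: m0_def)
  have "n = card (X - {x0})" using Suc.hyps x0 Suc.prems by simp
  moreover have "card (X - {x0}) = card (L - {m0})" using Suc.prems x0 m0 by simp
  ultimately obtain \<tau> where t: "bij_betw \<tau> (X - {x0}) (L - {m0})"
     "\<forall>x\<in>X - {x0}. \<forall>y\<in>X - {x0}. key x < key y \<longrightarrow> \<tau> x < \<tau> y"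
    using Suc.hyps(1)[of "X - {x0}" "L - {m0}"] Suc.prems by auto
  define \<sigma> where "\<sigma> = \<tau>(x0 := m0)"
  have b1: "bij_betw \<sigma> (X - {x0}) (L - {m0})"
    using t(1) by (rule bij_betw_cong[THEN iffD1, rotated]) (simp add: \<sigma>_def)
  have b2: "bij_betw \<sigma> {x0} {m0}" by (simp add: \<sigma>_def bij_betw_def)
  have "bij_betw \<sigma> ((X - {x0}) \<union> {x0}) ((L - {m0}) \<union> {m0})"
    by (rule bij_betw_combine[OF b1 b2]) auto
  then have bs: "bij_betw \<sigma> X L" using x0 m0 by (simp add: insert_absorb)
  have "\<forall>x\<in>X. \<forall>y\<in>X. key x < key y \<longrightarrow> \<sigma> x < \<sigma> y"
  proof (intro ballI impI)
    fix x y assume xy: "x \<in> X" "y \<in> X" "key x < key y"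
    show "\<sigma> x < \<sigma> y"
    proof (cases "y = x0")
      case True
      then have "x \<noteq> x0" using xy by auto
      then have "\<sigma> x \<in> L - {m0}" using b1 xy by (auto simp: bij_betw_def)
      then show ?thesis using True m0max by (force simp: \<sigma>_def)
    next
      case False
      then have "x \<noteq> x0" using xy x0max by force
      then show ?thesis using False t(2) xy by (simp add: \<sigma>_def)
    qed
  qed
  then show ?case using bs by blast
qed

locale pc =
  fixes r :: nat and VH :: "nat \<Rightarrow> 'a set" and EH :: "nat \<Rightarrow> 'a set set"
  assumes r3: "r \<ge> 3"
    and Hs: "\<And>i. i \<le> r \<Longrightarrow> simple_graph (VH i) (EH i)"
    and H2: "\<And>i. i \<le> r \<Longrightarrow> card (VH i) \<ge> 2"
    and ord: "\<And>i. i < r \<Longrightarrow> card (VH i) \<le> card (VH (Suc i))"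
    and degs: "\<And>i. i < r \<Longrightarrow> max_degree (VH i) (EH i) \<le> min_degree (VH (Suc i)) (EH (Suc i))"
begin

definition lo :: "nat \<Rightarrow> nat" where "lo i = (if i = 0 then 0 else if i = 1 then 1 else i - 1)"
definition hi :: "nat \<Rightarrow> nat" where
  "hi i = (if i = 0 then r else if i = 1 then 2 else if i = r then r else i + 1)"
definition al :: "nat \<Rightarrow> nat" where "al j = (if j \<le> 2 then 1 else j - 1)"
definition be :: "nat \<Rightarrow> nat" where "be j = (if j = r then r else j + 1)"

lemma pe: "i \<le> r \<Longrightarrow> pan_edge r i = {lo i, hi i}"
  using r3 by (auto simp: pan_edge_def lo_def hi_def)

lemma lohi: "i \<le> r \<Longrightarrow> lo i < hi i \<and> hi i \<le> r"
  using r3 by (auto simp: lo_def hi_def)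

lemma panE: "pan_E r = pan_edge r ` {0..r}"
proof -
  have "pan_E r = {{0, r}, {1, 2}, {r - 1, r}} \<union> {{j, j + 2} | j. 1 \<le> j \<and> j \<le> r - 2}"
    by (simp add: pan_E_def)
  also have "\<dots> = pan_edge r ` {0..r}"
  proof (rule set_eqI, rule iffI)
    fix e assume "e \<in> {{0, r}, {1, 2}, {r - 1, r}} \<union> {{j, j + 2} | j. 1 \<le> j \<and> j \<le> r - 2}"
    then consider "e = {0,r}" | "e = {1,2}" | "e = {r-1,r}" | j where "1 \<le> j" "j \<le> r - 2" "e = {j, j+2}"
      by blast
    then show "e \<in> pan_edge r ` {0..r}"
    proof cases
      case 1 then show ?thesis by (intro image_eqI[of _ _ 0]) (auto simp: pan_edge_def)
    next
      case 2 then show ?thesis using r3 by (intro image_eqI[of _ _ 1]) (auto simp: pan_edge_def)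
    next
      case 3 then show ?thesis using r3 by (intro image_eqI[of _ _ r]) (auto simp: pan_edge_def)
    next
      case 4 then show ?thesis using r3
        by (intro image_eqI[of _ _ "j+1"]) (auto simp: pan_edge_def)
    qed
  next
    fix e assume "e \<in> pan_edge r ` {0..r}"
    then obtain i where i: "i \<le> r" "e = pan_edge r i" by auto
    show "e \<in> {{0, r}, {1, 2}, {r - 1, r}} \<union> {{j, j + 2} | j. 1 \<le> j \<and> j \<le> r - 2}"
    proof (cases "i = 0 \<or> i = 1 \<or> i = r")
      case True then show ?thesis using i by (auto simp: pan_edge_def)
    next
      case False
      then have "e = {(i - 1), (i - 1) + 2}" "1 \<le> i - 1" "i - 1 \<le> r - 2" using i
        by (auto simp: pan_edge_def)
      then show ?thesis by blast
    qed
  qed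
  finally show ?thesis .
qed

lemma pe_inj: "i \<le> r \<Longrightarrow> i' \<le> r \<Longrightarrow> pan_edge r i = pan_edge r i' \<Longrightarrow> i = i'"
proof -
  assume a: "i \<le> r" "i' \<le> r" "pan_edge r i = pan_edge r i'"
  then have "{lo i, hi i} = {lo i', hi i'}" by (simp add: pe)
  moreover have "lo i < hi i" "lo i' < hi i'" using lohi a by auto
  ultimately have "lo i = lo i' \<and> hi i = hi i'"
    by (auto simp: doubleton_eq_iff)
  then show "i = i'" using a r3 by (auto simp: lo_def hi_def split: if_splits)
qed

lemma mem_pe: "j \<le> r \<Longrightarrow> i \<le> r \<Longrightarrow>
   j \<in> pan_edge r i \<longleftrightarrow> (i = 0 \<and> (j = 0 \<or> j = r)) \<or> (1 \<le> j \<and> (i = al j \<or> i = be j))"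
  using r3 by (auto simp: pan_edge_def al_def be_def)

lemma albe: "1 \<le> j \<Longrightarrow> j \<le> r \<Longrightarrow> 1 \<le> al j \<and> al j < be j \<and> be j \<le> r"
  using r3 by (auto simp: al_def be_def)

lemma albe_mono: "j \<le> k \<Longrightarrow> al j \<le> al k \<and> be j \<le> be k"
  by (auto simp: al_def be_def)

lemma albe_mem: "1 \<le> j \<Longrightarrow> j \<le> r \<Longrightarrow> j \<in> pan_edge r (al j) \<and> j \<in> pan_edge r (be j)"
  using mem_pe[of j "al j"] mem_pe[of j "be j"] albe[of j] by auto

lemma card_mono_idx: "i \<le> i' \<Longrightarrow> i' \<le> r \<Longrightarrow> card (VH i) \<le> card (VH i')"
proof (induction i' rule: dec_induct)
  case base then show ?case by simp
next
  case (step k) then show ?case using ord[of k] by simp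
qed

lemma finVH: "i \<le> r \<Longrightarrow> finite (VH i)"
  using Hs by (simp add: simple_graph_def)

lemma VHne: "i \<le> r \<Longrightarrow> VH i \<noteq> {}"
  using H2[of i] by auto

lemma EHsub: "i \<le> r \<Longrightarrow> e \<in> EH i \<Longrightarrow> e \<subseteq> VH i \<and> card e = 2"
  using Hs by (simp add: simple_graph_def)

lemma finEH: "i \<le> r \<Longrightarrow> finite (EH i)"
proof -
  assume i: "i \<le> r"
  have "EH i \<subseteq> Pow (VH i)" using EHsub[OF i] by auto
  then show ?thesis using finVH[OF i] finite_subset by blast
qed

lemma deg_le_max: "i \<le> r \<Longrightarrow> x \<in> VH i \<Longrightarrow> degree (EH i) x \<le> max_degree (VH i) (EH i)"
  using finVH by (simp add: max_degree_def)

lemma deg_ge_min: "i \<le> r \<Longrightarrow> x \<in> VH i \<Longrightarrow> min_degree (VH i) (EH i) \<le> degree (EH i) x"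
  using finVH by (simp add: min_degree_def)

lemma min_le_max: "i \<le> r \<Longrightarrow> min_degree (VH i) (EH i) \<le> max_degree (VH i) (EH i)"
proof -
  assume i: "i \<le> r"
  obtain x where "x \<in> VH i" using VHne[OF i] by auto
  then show ?thesis using deg_le_max deg_ge_min i by (meson le_trans)
qed

lemma max_min_chain: "i < i' \<Longrightarrow> i' \<le> r \<Longrightarrow> max_degree (VH i) (EH i) \<le> min_degree (VH i') (EH i')"
proof (induction i' rule: less_induct)
  case (less k)
  show ?case
  proof (cases "k = Suc i")
    case True then show ?thesis using degs[of i] less by simp
  next
    case False
    then obtain k' where k': "k = Suc k'" "i < k'" using less by (cases k) auto
    then have "max_degree (VH i) (EH i) \<le> min_degree (VH k') (EH k')" using less by simp
    also have "\<dots> \<le> max_degree (VH k') (EH k')" using min_le_max k' less by simp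
    also have "\<dots> \<le> min_degree (VH k) (EH k)" using degs[of k'] k' less by simp
    finally show ?thesis .
  qed
qed

lemma deg_chain: "i < i' \<Longrightarrow> i' \<le> r \<Longrightarrow> x \<in> VH i \<Longrightarrow> y \<in> VH i' \<Longrightarrow> degree (EH i) x \<le> degree (EH i') y"
  using max_min_chain deg_le_max deg_ge_min by (meson le_trans less_imp_le_nat)

end

context pc
begin

definition E where "E = corona_E (pan_E r) {0..r} (pan_edge r) VH EH"
definition V where "V = corona_V (pan_V r) {0..r} VH"
definition inc where "inc v = {e \<in> E. v \<in> e}"
definition spk :: "nat \<Rightarrow> nat \<Rightarrow> 'a \<Rightarrow> (nat + nat \<times> 'a) set" where
  "spk i u x = {Inl u, Inr (i, x)}"
definition bse :: "nat \<Rightarrow> (nat + nat \<times> 'a) set" where "bse i = Inl ` pan_edge r i"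
definition itn :: "nat \<Rightarrow> 'a set \<Rightarrow> (nat + nat \<times> 'a) set" where "itn i e = (\<lambda>z. Inr (i, z)) ` e"
definition ie where "ie i x = itn i ` {e \<in> EH i. x \<in> e}"

lemma E_alt: "E = bse ` {0..r} \<union> {itn i ee | i ee. i \<le> r \<and> ee \<in> EH i}
   \<union> {spk i u x | i u x. i \<le> r \<and> u \<in> pan_edge r i \<and> x \<in> VH i}"
proof -
  have 1: "(image Inl) ` pan_E r = bse ` {0..r}" by (simp add: panE bse_def image_image)
  have 2: "{(\<lambda>x. Inr (i, x)) ` e | i e. i \<in> {0..r} \<and> e \<in> EH i} = {itn i ee | i ee. i \<le> r \<and> ee \<in> EH i}"
    unfolding itn_def atLeastAtMost_iff by simp
  have 3: "{{Inl u, Inr (i, x)} | i u x. i \<in> {0..r} \<and> u \<in> pan_edge r i \<and> x \<in> VH i}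
     = {spk i u x | i u x. i \<le> r \<and> u \<in> pan_edge r i \<and> x \<in> VH i}"
    unfolding spk_def atLeastAtMost_iff by simp
  show ?thesis unfolding E_def corona_E_def 1 2 3 ..
qed

lemma E_cases:
  assumes "e \<in> E"
  obtains (B) i where "i \<le> r" "e = bse i"
   | (I) i ee where "i \<le> r" "ee \<in> EH i" "e = itn i ee"
   | (Q) i x where "i \<le> r" "x \<in> VH i" "e = spk i (lo i) x"
   | (P) i x where "i \<le> r" "x \<in> VH i" "e = spk i (hi i) x"
proof -
  have "e \<in> bse ` {0..r} \<or> e \<in> {itn i ee | i ee. i \<le> r \<and> ee \<in> EH i}
   \<or> e \<in> {spk i u x | i u x. i \<le> r \<and> u \<in> pan_edge r i \<and> x \<in> VH i}"
    using assms unfolding E_alt by blast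
  then show ?thesis
  proof (elim disjE)
    assume "e \<in> bse ` {0..r}" then show ?thesis using B by auto
  next
    assume "e \<in> {itn i ee | i ee. i \<le> r \<and> ee \<in> EH i}" then show ?thesis using I by auto
  next
    assume "e \<in> {spk i u x | i u x. i \<le> r \<and> u \<in> pan_edge r i \<and> x \<in> VH i}"
    then obtain i u x where "i \<le> r" "u \<in> pan_edge r i" "x \<in> VH i" "e = spk i u x" by blast
    moreover then have "u = lo i \<or> u = hi i" by (simp add: pe)
    ultimately show ?thesis using Q[of i x] P[of i x] by blast
  qed
qed

lemma bse_E: "i \<le> r \<Longrightarrow> bse i \<in> E" by (auto simp: E_alt)
lemma itn_E: "i \<le> r \<Longrightarrow> ee \<in> EH i \<Longrightarrow> itn i ee \<in> E" unfolding E_alt by blast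
lemma spk_E: "i \<le> r \<Longrightarrow> u \<in> pan_edge r i \<Longrightarrow> x \<in> VH i \<Longrightarrow> spk i u x \<in> E"
  unfolding E_alt by blast
lemma spklo_E: "i \<le> r \<Longrightarrow> x \<in> VH i \<Longrightarrow> spk i (lo i) x \<in> E" by (rule spk_E) (auto simp: pe)
lemma spkhi_E: "i \<le> r \<Longrightarrow> x \<in> VH i \<Longrightarrow> spk i (hi i) x \<in> E" by (rule spk_E) (auto simp: pe)

lemma finE: "finite E"
proof -
  have "{itn i ee | i ee. i \<le> r \<and> ee \<in> EH i} \<subseteq> (\<Union>i\<in>{0..r}. itn i ` EH i)" by force
  moreover have "finite (\<Union>i\<in>{0..r}. itn i ` EH i)" using finEH by auto
  ultimately have f1: "finite {itn i ee | i ee. i \<le> r \<and> ee \<in> EH i}" using finite_subset by blast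
  have "{spk i u x | i u x. i \<le> r \<and> u \<in> pan_edge r i \<and> x \<in> VH i}
     \<subseteq> (\<Union>i\<in>{0..r}. \<Union>u\<in>pan_edge r i. spk i u ` VH i)" by force
  moreover have "finite (\<Union>i\<in>{0..r}. \<Union>u\<in>pan_edge r i. spk i u ` VH i)"
    using finVH by (auto simp: pe)
  ultimately have f2: "finite {spk i u x | i u x. i \<le> r \<and> u \<in> pan_edge r i \<and> x \<in> VH i}"
    using finite_subset by blast
  show ?thesis unfolding E_alt using f1 f2 by blast
qed

lemma spk_eq: "spk i u x = spk i' u' x' \<longleftrightarrow> i = i' \<and> u = u' \<and> x = x'"
  by (auto simp: spk_def doubleton_eq_iff)

lemma bse_noInr: "Inr z \<notin> bse i" by (auto simp: bse_def)
lemma itn_noInl: "Inl u \<notin> itn i ee" by (auto simp: itn_def)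
lemma Inr_itn: "Inr (i', x) \<in> itn i ee \<longleftrightarrow> i' = i \<and> x \<in> ee" by (auto simp: itn_def)
lemma Inr_spk: "Inr (i', x') \<in> spk i u x \<longleftrightarrow> i' = i \<and> x' = x" by (auto simp: spk_def)
lemma Inl_spk: "Inl u' \<in> spk i u x \<longleftrightarrow> u' = u" by (auto simp: spk_def)
lemma Inl_bse: "Inl u \<in> bse i \<longleftrightarrow> u \<in> pan_edge r i" by (auto simp: bse_def)

lemma bse_inj: "i \<le> r \<Longrightarrow> i' \<le> r \<Longrightarrow> bse i = bse i' \<Longrightarrow> i = i'"
proof -
  assume a: "i \<le> r" "i' \<le> r" "bse i = bse i'"
  then have "pan_edge r i = pan_edge r i'" unfolding bse_def by (simp add: inj_image_eq_iff)
  then show ?thesis using pe_inj a by blast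
qed

lemma inc_Inr: assumes "i \<le> r" "x \<in> VH i"
  shows "inc (Inr (i, x)) = ie i x \<union> {spk i (lo i) x, spk i (hi i) x}"
proof (rule set_eqI, rule iffI)
  fix e assume "e \<in> inc (Inr (i, x))"
  then have e: "e \<in> E" "Inr (i,x) \<in> e" by (auto simp: inc_def)
  from e(1) show "e \<in> ie i x \<union> {spk i (lo i) x, spk i (hi i) x}"
  proof (cases rule: E_cases)
    case (B i') then show ?thesis using e bse_noInr by auto
  next
    case (I i' ee) then show ?thesis using e by (auto simp: Inr_itn ie_def)
  next
    case (Q i' x') then show ?thesis using e by (auto simp: Inr_spk)
  next
    case (P i' x') then show ?thesis using e by (auto simp: Inr_spk)
  qed
next
  fix e assume "e \<in> ie i x \<union> {spk i (lo i) x, spk i (hi i) x}"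
  then show "e \<in> inc (Inr (i, x))" using assms
    by (auto simp: inc_def ie_def itn_E spklo_E spkhi_E Inr_itn Inr_spk)
qed

lemma card_ie: "i \<le> r \<Longrightarrow> card (ie i x) = degree (EH i) x"
proof -
  have "inj_on (itn i) {e \<in> EH i. x \<in> e}"
    unfolding itn_def by (rule inj_onI) (auto simp: inj_image_eq_iff inj_def)
  then show ?thesis by (simp add: ie_def degree_def card_image)
qed

lemma fin_ie: "i \<le> r \<Longrightarrow> finite (ie i x)"
  using finEH by (simp add: ie_def)

lemma ie_sub: "i \<le> r \<Longrightarrow> x \<in> VH i \<Longrightarrow> ie i x \<subseteq> E"
  by (auto simp: ie_def itn_E)

lemma spk_notin_ie: "spk i' u y \<notin> ie i x"
proof
  assume "spk i' u y \<in> ie i x"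
  then obtain ee where "spk i' u y = itn i ee" by (auto simp: ie_def)
  moreover have "Inl u \<in> spk i' u y" by (simp add: Inl_spk)
  ultimately show False by (simp add: itn_noInl)
qed

lemma spk_lohi_ne: "i \<le> r \<Longrightarrow> spk i (lo i) x \<noteq> spk i (hi i) x"
  unfolding spk_eq using lohi[of i] by simp

lemma card_inc_Inr: "i \<le> r \<Longrightarrow> x \<in> VH i \<Longrightarrow> card (inc (Inr (i, x))) = degree (EH i) x + 2"
proof -
  assume a: "i \<le> r" "x \<in> VH i"
  have "card (ie i x \<union> {spk i (lo i) x, spk i (hi i) x}) = card (ie i x) + card {spk i (lo i) x, spk i (hi i) x}"
    by (rule card_Un_disjoint) (use fin_ie a spk_notin_ie in auto)
  then show ?thesis using inc_Inr[OF a] card_ie[OF a(1)] spk_lohi_ne[OF a(1)] by simp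
qed

lemma inc_Inl: assumes "j \<le> r"
  shows "inc (Inl j) = {bse i | i. i \<le> r \<and> j \<in> pan_edge r i}
                     \<union> {spk i j x | i x. i \<le> r \<and> j \<in> pan_edge r i \<and> x \<in> VH i}"
proof (rule set_eqI, rule iffI)
  fix e assume "e \<in> inc (Inl j)"
  then have e: "e \<in> E" "Inl j \<in> e" by (auto simp: inc_def)
  from e(1) show "e \<in> {bse i | i. i \<le> r \<and> j \<in> pan_edge r i}
                     \<union> {spk i j x | i x. i \<le> r \<and> j \<in> pan_edge r i \<and> x \<in> VH i}"
  proof (cases rule: E_cases)
    case (B i') then show ?thesis using e by (auto simp: Inl_bse)
  next
    case (I i' ee) then show ?thesis using e by (auto simp: itn_noInl)
  next
    case (Q i' x') then show ?thesis using e by (auto simp: Inl_spk pe)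
  next
    case (P i' x') then show ?thesis using e by (auto simp: Inl_spk pe)
  qed
next
  fix e assume "e \<in> {bse i | i. i \<le> r \<and> j \<in> pan_edge r i}
                     \<union> {spk i j x | i x. i \<le> r \<and> j \<in> pan_edge r i \<and> x \<in> VH i}"
  then show "e \<in> inc (Inl j)"
    by (auto simp: inc_def bse_E spk_E Inl_bse Inl_spk)
qed

definition SS :: "nat \<Rightarrow> nat \<Rightarrow> (nat + nat \<times> 'a) set set" where "SS a j = spk a j ` VH a"

lemma card_SS: "a \<le> r \<Longrightarrow> card (SS a j) = card (VH a)"
  unfolding SS_def by (rule card_image) (auto simp: inj_on_def spk_eq)

lemma fin_SS: "a \<le> r \<Longrightarrow> finite (SS a j)"
  using finVH by (simp add: SS_def)

lemma inc_T_sup: assumes "1 \<le> j" "j \<le> r"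
  shows "SS (al j) j \<union> SS (be j) j \<union> {bse (al j), bse (be j)} \<subseteq> inc (Inl j)"
proof -
  have 0: "inc (Inl j) = {bse i | i. i \<le> r \<and> j \<in> pan_edge r i}
                     \<union> {spk i j x | i x. i \<le> r \<and> j \<in> pan_edge r i \<and> x \<in> VH i}"
    by (rule inc_Inl) (use assms in simp)
  have a1: "al j \<le> r" "be j \<le> r" using albe[OF assms] by auto
  have a2: "j \<in> pan_edge r (al j)" "j \<in> pan_edge r (be j)" using albe_mem[OF assms] by auto
  show ?thesis unfolding 0 SS_def using a1 a2 by blast
qed

lemma inc_T_eq: assumes "1 \<le> j" "j < r"
  shows "inc (Inl j) = SS (al j) j \<union> SS (be j) j \<union> {bse (al j), bse (be j)}"
proof -
  have h: "\<And>i. (i \<le> r \<and> j \<in> pan_edge r i) \<longleftrightarrow> (i = al j \<or> i = be j)"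
    using mem_pe assms albe[of j] by auto
  have 1: "{bse i | i. i \<le> r \<and> j \<in> pan_edge r i} = {bse (al j), bse (be j)}"
    unfolding h by blast
  have 2: "{spk i j x | i x. i \<le> r \<and> j \<in> pan_edge r i \<and> x \<in> VH i} = SS (al j) j \<union> SS (be j) j"
  proof -
    have "{spk i j x | i x. i \<le> r \<and> j \<in> pan_edge r i \<and> x \<in> VH i}
         = {spk i j x | i x. (i \<le> r \<and> j \<in> pan_edge r i) \<and> x \<in> VH i}" by simp
    also have "\<dots> = {spk i j x | i x. (i = al j \<or> i = be j) \<and> x \<in> VH i}" unfolding h ..
    also have "\<dots> = SS (al j) j \<union> SS (be j) j" unfolding SS_def by blast
    finally show ?thesis .
  qed
  have 0: "inc (Inl j) = {bse i | i. i \<le> r \<and> j \<in> pan_edge r i}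
                     \<union> {spk i j x | i x. i \<le> r \<and> j \<in> pan_edge r i \<and> x \<in> VH i}"
    by (rule inc_Inl) (use assms in simp)
  show ?thesis unfolding 0 1 2 by blast
qed

lemma inc_1_sub: "inc (Inl 1) \<subseteq> SS 1 1 \<union> SS 2 1 \<union> {bse 1, bse 2}"
proof -
  have "al 1 = 1" "be 1 = 2" using r3 by (auto simp: al_def be_def)
  then show ?thesis using inc_T_eq[of 1] r3 by simp
qed

lemma card_inc_1: "card (inc (Inl 1)) \<le> card (VH 1) + card (VH 2) + 2"
proof -
  have "card (inc (Inl 1)) \<le> card (SS 1 1 \<union> SS 2 1 \<union> {bse 1, bse 2})"
    using inc_1_sub fin_SS r3 by (intro card_mono) auto
  also have "\<dots> \<le> card (SS 1 1) + card (SS 2 1) + card {bse 1, bse 2}"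
    by (meson add_le_mono card_Un_le le_trans order_refl)
  also have "\<dots> \<le> card (VH 1) + card (VH 2) + 2"
    using card_SS r3 by (simp add: card_insert_le_m1)
  finally show ?thesis .
qed

end

context pc
begin

definition QC :: "nat \<Rightarrow> nat" where "QC i = (if i = 0 then 0 else r + 2 + 2 * i)"
definition PC :: "nat \<Rightarrow> nat" where "PC i = r + 3 + 2 * i"
definition BC :: "nat \<Rightarrow> nat" where "BC i = (if i = 0 then 1 else 3 * r + 4 + i)"
definition hix :: "(nat + nat \<times> 'a) set \<Rightarrow> nat" where "hix e = (SOME i. \<exists>x. Inr (i, x) \<in> e)"
definition cls :: "(nat + nat \<times> 'a) set \<Rightarrow> nat" where
  "cls e = (if \<exists>z. Inr z \<in> e then
     (if Inl (hi (hix e)) \<in> e then PC (hix e) else if Inl (lo (hix e)) \<in> e then QC (hix e) else 2 + hix e)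
    else BC (SOME i. i \<le> r \<and> e = bse i))"

lemma hix_spk: "hix (spk i u x) = i"
  unfolding hix_def Inr_spk by auto

lemma hix_itn: "ee \<noteq> {} \<Longrightarrow> hix (itn i ee) = i"
  unfolding hix_def Inr_itn by auto

lemma cls_spk_lo: "i \<le> r \<Longrightarrow> cls (spk i (lo i) x) = QC i"
proof -
  assume i: "i \<le> r"
  have "\<exists>z. Inr z \<in> spk i (lo i) x" by (auto simp: spk_def)
  moreover have "Inl (hi i) \<notin> spk i (lo i) x" using lohi[OF i] by (simp add: Inl_spk)
  ultimately show ?thesis unfolding cls_def hix_spk by (simp add: Inl_spk)
qed

lemma cls_spk_hi: "i \<le> r \<Longrightarrow> cls (spk i (hi i) x) = PC i"
proof -
  assume i: "i \<le> r"
  have "\<exists>z. Inr z \<in> spk i (hi i) x" by (auto simp: spk_def)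
  then show ?thesis unfolding cls_def hix_spk by (simp add: Inl_spk)
qed

lemma cls_itn: "i \<le> r \<Longrightarrow> ee \<in> EH i \<Longrightarrow> cls (itn i ee) = 2 + i"
proof -
  assume a: "i \<le> r" "ee \<in> EH i"
  then have "card ee = 2" using EHsub by blast
  then have ne: "ee \<noteq> {}" by auto
  then obtain z where "z \<in> ee" by auto
  then have "\<exists>z. Inr z \<in> itn i ee" by (auto simp: itn_def)
  then show ?thesis unfolding cls_def hix_itn[OF ne] by (simp add: itn_noInl)
qed

lemma cls_bse: "i \<le> r \<Longrightarrow> cls (bse i) = BC i"
proof -
  assume i: "i \<le> r"
  have "\<not> (\<exists>z. Inr z \<in> bse i)" by (simp add: bse_noInr)
  moreover have "(SOME i'. i' \<le> r \<and> bse i = bse i') = i"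
    using i bse_inj by (intro some_equality) auto
  ultimately show ?thesis unfolding cls_def by simp
qed

lemma cls_spk: "i \<le> r \<Longrightarrow> u \<in> pan_edge r i \<Longrightarrow> cls (spk i u x) = (if u = lo i then QC i else PC i)"
  using cls_spk_lo cls_spk_hi pe by auto

lemma spk_cls_bounds: "i \<le> r \<Longrightarrow> u \<in> pan_edge r i \<Longrightarrow>
   cls (spk i u x) \<le> 3 * r + 3 \<and> (1 \<le> i \<longrightarrow> r + 4 \<le> cls (spk i u x))
   \<and> (i = 0 \<longrightarrow> (cls (spk i u x) = 0 \<longleftrightarrow> u = 0) \<and> (u \<noteq> 0 \<longrightarrow> r + 3 \<le> cls (spk i u x)))"
  using cls_spk[of i u x] by (auto simp: QC_def PC_def lo_def)

lemma spk_cls_lt: "i < i' \<Longrightarrow> i' \<le> r \<Longrightarrow> u \<in> pan_edge r i \<Longrightarrow> u' \<in> pan_edge r i' \<Longrightarrow>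
    cls (spk i u x) < cls (spk i' u' y)"
  using cls_spk[of i u x] cls_spk[of i' u' y] by (auto simp: QC_def PC_def)

lemma spk_cls_lohi: "i \<le> r \<Longrightarrow> cls (spk i (lo i) x) < cls (spk i (hi i) y)"
  using cls_spk_lo cls_spk_hi by (auto simp: QC_def PC_def)

lemma cls_le1_iff: assumes "e \<in> E" shows "cls e \<le> 1 \<longleftrightarrow> Inl 0 \<in> e"
  using assms
proof (cases rule: E_cases)
  case (B i) then show ?thesis using r3
    by (auto simp: cls_bse BC_def Inl_bse mem_pe)
next
  case (I i ee) then show ?thesis by (simp add: cls_itn itn_noInl)
next
  case (Q i x)
  then have "cls e = QC i" using cls_spk_lo by simp
  moreover have "Inl 0 \<in> e \<longleftrightarrow> lo i = 0" using Q by (simp add: Inl_spk)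
  ultimately show ?thesis by (auto simp: QC_def lo_def)
next
  case (P i x)
  then have "cls e = PC i" using cls_spk_hi by simp
  moreover have "Inl 0 \<in> e \<longleftrightarrow> hi i = 0" using P by (simp add: Inl_spk)
  moreover have "hi i \<noteq> 0" using lohi[of i] P by auto
  ultimately show ?thesis by (auto simp: PC_def)
qed

lemma cls_itn_lt_spk: "i \<le> r \<Longrightarrow> ee \<in> EH i \<Longrightarrow> 1 \<le> a \<Longrightarrow> a \<le> r \<Longrightarrow> u \<in> pan_edge r a \<Longrightarrow>
   cls (itn i ee) < cls (spk a u y)"
  using spk_cls_bounds[of a u y] cls_itn[of i ee] by auto

lemma cls_spk_lt_bse: "i \<le> r \<Longrightarrow> u \<in> pan_edge r i \<Longrightarrow> 1 \<le> a \<Longrightarrow> a \<le> r \<Longrightarrow>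
   cls (spk i u x) < cls (bse a)"
  using spk_cls_bounds[of i u x] cls_bse[of a] by (auto simp: BC_def)

lemma cls_bse_mono: "1 \<le> a \<Longrightarrow> a \<le> b \<Longrightarrow> b \<le> r \<Longrightarrow> cls (bse a) \<le> cls (bse b)"
  using cls_bse[of a] cls_bse[of b] by (auto simp: BC_def)

end

locale pc_lab = pc r VH EH for r :: nat and VH :: "nat \<Rightarrow> 'a set" and EH +
  fixes f :: "(nat + nat \<times> 'a) set \<Rightarrow> nat"
  assumes fcls: "\<And>e e'. e \<in> E \<Longrightarrow> e' \<in> E \<Longrightarrow> cls e < cls e' \<Longrightarrow> f e < f e'"
    and fH: "\<And>i x y. i \<le> r \<Longrightarrow> x \<in> VH i \<Longrightarrow> y \<in> VH i \<Longrightarrow> x \<noteq> y \<Longrightarrow>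
          (\<Sum>e\<in>inc (Inr (i,x)). f e) \<noteq> (\<Sum>e\<in>inc (Inr (i,y)). f e)"
    and hc: "\<And>i x. i \<le> r \<Longrightarrow> x \<in> VH i \<Longrightarrow> card (inc (Inl 0)) \<le> card (inc (Inr (i,x)))"
    and hd: "\<And>x. x \<in> VH r \<Longrightarrow> card (inc (Inr (r,x))) \<le> card (inc (Inl 1))"
begin

definition w where "w v = (\<Sum>e\<in>inc v. f e)"

lemma inc_sub: "inc v \<subseteq> E" by (auto simp: inc_def)
lemma fin_inc: "finite (inc v)" using finE inc_sub finite_subset by blast

lemma w_Inr: "i \<le> r \<Longrightarrow> x \<in> VH i \<Longrightarrow>
   w (Inr (i, x)) = sum f (ie i x) + f (spk i (lo i) x) + f (spk i (hi i) x)"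
proof -
  assume a: "i \<le> r" "x \<in> VH i"
  have "sum f (ie i x \<union> {spk i (lo i) x, spk i (hi i) x}) = sum f (ie i x) + sum f {spk i (lo i) x, spk i (hi i) x}"
    by (rule sum.union_disjoint) (use fin_ie a spk_notin_ie in auto)
  then show ?thesis using spk_lohi_ne[OF a(1)] by (simp add: w_def inc_Inr[OF a])
qed

lemma loin: "i \<le> r \<Longrightarrow> lo i \<in> pan_edge r i" by (simp add: pe)
lemma hiin: "i \<le> r \<Longrightarrow> hi i \<in> pan_edge r i" by (simp add: pe)

lemma H_across: assumes "i < i'" "i' \<le> r" "x \<in> VH i" "y \<in> VH i'"
  shows "w (Inr (i, x)) < w (Inr (i', y))"
proof -
  have i: "i \<le> r" using assms by simp
  have "sum f (ie i x) \<le> sum f (ie i' y)"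
  proof (rule sum_le_blocks)
    show "finite (ie i x)" "finite (ie i' y)" using fin_ie i assms by auto
    show "card (ie i x) \<le> card (ie i' y)" using card_ie deg_chain assms i by simp
    fix a b assume ab: "a \<in> ie i x" "b \<in> ie i' y"
    then obtain ee ee' where "ee \<in> EH i" "a = itn i ee" "ee' \<in> EH i'" "b = itn i' ee'"
      by (auto simp: ie_def)
    then have "cls a < cls b" using cls_itn assms i by simp
    then show "f a < f b" using fcls ab ie_sub assms i by blast
  qed
  moreover have "f (spk i (lo i) x) < f (spk i' (lo i') y)"
    using fcls spklo_E spk_cls_lt loin assms i by simp
  moreover have "f (spk i (hi i) x) < f (spk i' (hi i') y)"
    using fcls spkhi_E spk_cls_lt hiin assms i by simp
  ultimately show ?thesis using w_Inr assms i by simp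
qed

lemma u0_H: assumes "i \<le> r" "x \<in> VH i"
  shows "w (Inl 0) < w (Inr (i, x))"
  unfolding w_def
proof (rule sum_lt_exchange)
  show "finite (inc (Inl 0))" "finite (inc (Inr (i, x)))" by (rule fin_inc)+
  show "card (inc (Inl 0)) \<le> card (inc (Inr (i, x)))" using hc assms by blast
  have "bse 0 \<in> inc (Inl 0)" using bse_E[of 0] by (auto simp: inc_def Inl_bse pan_edge_def)
  moreover have "bse 0 \<notin> inc (Inr (i, x))" by (auto simp: inc_def bse_noInr)
  ultimately show "inc (Inl 0) - inc (Inr (i, x)) \<noteq> {}" by blast
  fix a b assume ab: "a \<in> inc (Inl 0) - inc (Inr (i, x))" "b \<in> inc (Inr (i, x)) - inc (Inl 0)"
  then have "a \<in> E" "b \<in> E" "Inl 0 \<in> a" "Inl 0 \<notin> b" by (auto simp: inc_def)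
  then have "cls a \<le> 1" "\<not> cls b \<le> 1" using cls_le1_iff by auto
  then have "cls a < cls b" by linarith
  then show "f a < f b" using fcls \<open>a \<in> E\<close> \<open>b \<in> E\<close> by blast
qed

lemma deg_bound: assumes "i \<le> r" "x \<in> VH i"
  shows "degree (EH i) x \<le> card (VH 1) + card (VH 2)"
proof -
  obtain y where y: "y \<in> VH r" "degree (EH i) x \<le> degree (EH r) y"
  proof (cases "i = r")
    case True then show ?thesis using that assms by auto
  next
    case False
    obtain y where "y \<in> VH r" using VHne[of r] by auto
    then show ?thesis using that deg_chain[of i r x y] assms False by simp
  qed
  have "degree (EH r) y + 2 = card (inc (Inr (r, y)))" using card_inc_Inr y by simp
  also have "\<dots> \<le> card (inc (Inl 1))" using hd y by simp
  also have "\<dots> \<le> card (VH 1) + card (VH 2) + 2" by (rule card_inc_1)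
  finally show ?thesis using y by simp
qed

definition G where "G a j = sum f (SS a j) + f (bse a)"

lemma G_lt: assumes "1 \<le> a" "a \<le> b" "b \<le> r" "j < k" "j \<in> pan_edge r a" "k \<in> pan_edge r b"
  shows "G a j < G b k"
proof -
  have "sum f (SS a j) < sum f (SS b k)"
  proof (rule sum_lt_blocks)
    show "finite (SS a j)" "finite (SS b k)" using fin_SS assms by auto
    show "SS a j \<noteq> {}" using VHne[of a] assms by (simp add: SS_def)
    show "card (SS a j) \<le> card (SS b k)" using card_SS card_mono_idx assms by simp
    fix p q assume pq: "p \<in> SS a j" "q \<in> SS b k"
    then obtain x y where xy: "x \<in> VH a" "p = spk a j x" "y \<in> VH b" "q = spk b k y"
      by (auto simp: SS_def)
    have "cls p < cls q"
    proof (cases "a = b")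
      case False then show ?thesis using spk_cls_lt xy assms by simp
    next
      case True
      then have "j = lo a" "k = hi a" using assms lohi[of a] pe[of a] by auto
      then show ?thesis using spk_cls_lohi xy assms True by simp
    qed
    then show "f p < f q" using fcls xy spk_E assms by simp
  qed
  moreover have "f (bse a) \<le> f (bse b)"
  proof (cases "a = b")
    case False
    then have "cls (bse a) < cls (bse b)" using cls_bse assms by (simp add: BC_def)
    moreover have "bse a \<in> E" "bse b \<in> E" using bse_E assms by auto
    ultimately show ?thesis using fcls less_imp_le by blast
  qed simp
  ultimately show ?thesis by (simp add: G_def)
qed

lemma w_T_ge: assumes "1 \<le> j" "j \<le> r" shows "G (al j) j + G (be j) j \<le> w (Inl j)"
proof -
  have ab: "1 \<le> al j" "al j < be j" "be j \<le> r" using albe[OF assms] by auto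
  have bne: "bse (al j) \<noteq> bse (be j)" using bse_inj[of "al j" "be j"] ab by auto
  have disj: "SS (al j) j \<inter> SS (be j) j = {}" using ab by (auto simp: SS_def spk_eq)
  have bSS: "bse (al j) \<notin> SS (al j) j \<union> SS (be j) j" "bse (be j) \<notin> SS (al j) j \<union> SS (be j) j"
    by (auto simp: SS_def spk_def bse_noInr)
  have "G (al j) j + G (be j) j = sum f (SS (al j) j \<union> SS (be j) j \<union> {bse (al j), bse (be j)})"
    using bSS bne fin_SS ab disj by (simp add: sum.union_disjoint G_def)
  also have "\<dots> \<le> w (Inl j)"
    unfolding w_def using inc_T_sup[OF assms] fin_inc by (intro sum_mono2) auto
  finally show ?thesis .
qed

lemma w_T_eq: assumes "1 \<le> j" "j < r" shows "w (Inl j) = G (al j) j + G (be j) j"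
proof -
  have ab: "1 \<le> al j" "al j < be j" "be j \<le> r" using albe[of j] assms by auto
  have bne: "bse (al j) \<noteq> bse (be j)" using bse_inj[of "al j" "be j"] ab by auto
  have disj: "SS (al j) j \<inter> SS (be j) j = {}" using ab by (auto simp: SS_def spk_eq)
  have bSS: "bse (al j) \<notin> SS (al j) j \<union> SS (be j) j" "bse (be j) \<notin> SS (al j) j \<union> SS (be j) j"
    by (auto simp: SS_def spk_def bse_noInr)
  have "G (al j) j + G (be j) j = sum f (SS (al j) j \<union> SS (be j) j \<union> {bse (al j), bse (be j)})"
    using bSS bne fin_SS ab disj by (simp add: sum.union_disjoint G_def)
  then show ?thesis unfolding w_def inc_T_eq[OF assms] by simp
qed

lemma T_T: assumes "1 \<le> j" "j < k" "k \<le> r" shows "w (Inl j) < w (Inl k)"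
proof -
  have j: "j < r" "j \<le> r" using assms by auto
  have k1: "1 \<le> k" using assms by simp
  have m: "al j \<le> al k" "be j \<le> be k" using albe_mono[of j k] assms by auto
  have "G (al j) j < G (al k) k"
    by (rule G_lt) (use albe[OF assms(1) j(2)] albe[OF k1 assms(3)] m
      albe_mem[OF assms(1) j(2)] albe_mem[OF k1 assms(3)] assms in auto)
  moreover have "G (be j) j < G (be k) k"
    by (rule G_lt) (use albe[OF assms(1) j(2)] albe[OF k1 assms(3)] m
      albe_mem[OF assms(1) j(2)] albe_mem[OF k1 assms(3)] assms in auto)
  ultimately show ?thesis using w_T_eq[OF assms(1) j(1)] w_T_ge[OF k1 assms(3)] by simp
qed

lemma H_T: assumes "i \<le> r" "x \<in> VH i" "1 \<le> j" "j \<le> r"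
  shows "w (Inr (i, x)) < w (Inl j)"
proof -
  define a where "a = al j"
  define b where "b = be j"
  have ab: "1 \<le> a" "a < b" "b \<le> r" using albe[OF assms(3,4)] by (auto simp: a_def b_def)
  have jab: "j \<in> pan_edge r a" "j \<in> pan_edge r b" using albe_mem[OF assms(3,4)] by (auto simp: a_def b_def)
  have disj: "SS a j \<inter> SS b j = {}" using ab by (auto simp: SS_def spk_eq)
  have cSS: "card (SS a j \<union> SS b j) = card (VH a) + card (VH b)"
    using card_Un_disjoint[OF fin_SS fin_SS disj] card_SS ab by simp
  have "card (VH 1) \<le> card (VH a)" "card (VH 2) \<le> card (VH b)"
    using card_mono_idx ab by auto
  then have cc: "card (ie i x) \<le> card (SS a j \<union> SS b j)"
    using deg_bound[OF assms(1,2)] card_ie[OF assms(1)] cSS by simp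
  have SSE: "SS a j \<union> SS b j \<subseteq> E" using spk_E jab ab by (auto simp: SS_def)
  have s1: "sum f (ie i x) \<le> sum f (SS a j \<union> SS b j)"
  proof (rule sum_le_blocks)
    show "finite (ie i x)" "finite (SS a j \<union> SS b j)" using fin_ie fin_SS assms ab by auto
    show "card (ie i x) \<le> card (SS a j \<union> SS b j)" by (rule cc)
    fix p q assume pq: "p \<in> ie i x" "q \<in> SS a j \<union> SS b j"
    then obtain ee where ee: "ee \<in> EH i" "p = itn i ee" by (auto simp: ie_def)
    have "cls p < cls q"
      using pq(2) ee cls_itn_lt_spk[of i ee a j] cls_itn_lt_spk[of i ee b j] assms ab jab
      by (auto simp: SS_def)
    then show "f p < f q" using fcls pq ie_sub assms SSE by blast
  qed
  have s2: "f (spk i (lo i) x) < f (bse a)"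
    using fcls spklo_E bse_E cls_spk_lt_bse loin assms ab by simp
  have s3: "f (spk i (hi i) x) < f (bse b)"
    using fcls spkhi_E bse_E cls_spk_lt_bse hiin assms ab by simp
  have "sum f (SS a j \<union> SS b j) = sum f (SS a j) + sum f (SS b j)"
    using fin_SS ab disj by (simp add: sum.union_disjoint)
  then have "sum f (SS a j \<union> SS b j) + f (bse a) + f (bse b) \<le> w (Inl j)"
    using w_T_ge[OF assms(3,4)] by (simp add: G_def a_def b_def)
  then show ?thesis using w_Inr[OF assms(1,2)] s1 s2 s3 by simp
qed


lemma T_order: assumes "a < b" "b \<le> r" shows "w (Inl a) < w (Inl b)"
proof (cases "a = 0")
  case True
  obtain x0 where x0: "x0 \<in> VH 0" using VHne[of 0] by auto
  have "w (Inl 0) < w (Inr (0, x0))" using u0_H x0 by simp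
  also have "\<dots> < w (Inl b)" using H_T[of 0 x0 b] x0 assms by simp
  finally show ?thesis using True by simp
next
  case False then show ?thesis using T_T assms by simp
qed

lemma V_cases: assumes "v \<in> V"
  obtains (L) j where "j \<le> r" "v = Inl j" | (R) i x where "i \<le> r" "x \<in> VH i" "v = Inr (i, x)"
  using assms unfolding V_def corona_V_def pan_V_def by auto

lemma w_neq: assumes "u \<in> V" "v \<in> V" "u \<noteq> v" shows "w u \<noteq> w v"
  using assms(1)
proof (cases rule: V_cases)
  case (L a)
  from assms(2) show ?thesis
  proof (cases rule: V_cases)
    case (L b)
    then have "a \<noteq> b" using assms \<open>u = Inl a\<close> by auto
    then show ?thesis using T_order[of a b] T_order[of b a] L \<open>u = Inl a\<close> \<open>a \<le> r\<close>
      by (cases "a < b") auto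
  next
    case (R i x)
    then show ?thesis using u0_H[of i x] H_T[of i x a] \<open>u = Inl a\<close> \<open>a \<le> r\<close>
      by (cases "a = 0") auto
  qed
next
  case (R i x)
  note R1 = R
  from assms(2) show ?thesis
  proof (cases rule: V_cases)
    case (L a)
    then show ?thesis using u0_H[of i x] H_T[of i x a] R1
      by (cases "a = 0") auto
  next
    case (R i' y)
    note R' = R
    show ?thesis
    proof (cases "i = i'")
      case True
      then have "x \<noteq> y" using assms R1 R' by auto
      then show ?thesis using fH[of i x y] R1 R' True by (simp add: w_def)
    next
      case False
      then show ?thesis using H_across[of i i' x y] H_across[of i' i y x] R1 R'
        by (cases "i < i'") auto
    qed
  qed
qed

lemma antimagic_VE: assumes "bij_betw f E {1..card E}" shows "antimagic V E"
  unfolding antimagic_def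
proof (intro exI conjI)
  show "bij_betw f E {1..card E}" by (rule assms)
  show "inj_on (\<lambda>v. \<Sum>e\<in>{e \<in> E. v \<in> e}. f e) V"
    using w_neq unfolding w_def inc_def by (meson inj_onI)
qed
end

context pc
begin

definition Pset :: "nat \<Rightarrow> (nat + nat \<times> 'a) set set" where "Pset i = spk i (hi i) ` VH i"
definition Pall where "Pall = (\<Union>i\<in>{0..r}. Pset i)"

lemma Pset_E: "i \<le> r \<Longrightarrow> Pset i \<subseteq> E" using spkhi_E by (auto simp: Pset_def)

lemma card_Pset: "i \<le> r \<Longrightarrow> card (Pset i) = card (VH i)"
  unfolding Pset_def by (rule card_image) (auto simp: inj_on_def spk_eq)

lemma exists_f: "\<exists>f. bij_betw f E {1..card E}
   \<and> (\<forall>e e'. e \<in> E \<longrightarrow> e' \<in> E \<longrightarrow> cls e < cls e' \<longrightarrow> f e < f e')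
   \<and> (\<forall>i x y. i \<le> r \<longrightarrow> x \<in> VH i \<longrightarrow> y \<in> VH i \<longrightarrow> x \<noteq> y \<longrightarrow>
          (\<Sum>e\<in>inc (Inr (i,x)). f e) \<noteq> (\<Sum>e\<in>inc (Inr (i,y)). f e))"
proof -
  obtain f0 where f0b: "bij_betw f0 E {1..card E}"
    and f0m: "\<forall>e\<in>E. \<forall>e'\<in>E. cls e < cls e' \<longrightarrow> f0 e < f0 e'"
    using mono_bij_exists[of E "{1..card E}" cls] finE by auto
  have f0inj: "inj_on f0 E" using f0b by (simp add: bij_betw_def)
  define s where "s i x = (\<Sum>e\<in>inc (Inr (i,x)) - {spk i (hi i) x}. f0 e)" for i x
  have "\<forall>i. \<exists>\<tau>. i \<le> r \<longrightarrow> bij_betw \<tau> (VH i) (f0 ` Pset i)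
            \<and> (\<forall>x\<in>VH i. \<forall>y\<in>VH i. s i x < s i y \<longrightarrow> \<tau> x < \<tau> y)"
  proof
    fix i
    show "\<exists>\<tau>. i \<le> r \<longrightarrow> bij_betw \<tau> (VH i) (f0 ` Pset i)
            \<and> (\<forall>x\<in>VH i. \<forall>y\<in>VH i. s i x < s i y \<longrightarrow> \<tau> x < \<tau> y)"
    proof (cases "i \<le> r")
      case True
      have "card (f0 ` Pset i) = card (VH i)"
        using card_image[OF inj_on_subset[OF f0inj Pset_E[OF True]]] card_Pset[OF True] by simp
      then show ?thesis
        using mono_bij_exists[of "VH i" "f0 ` Pset i" "s i"] finVH[OF True] True
          finite_subset[OF Pset_E[OF True] finE] by auto
    qed simp
  qed
  then obtain T where T: "\<And>i. i \<le> r \<Longrightarrow> bij_betw (T i) (VH i) (f0 ` Pset i)"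
     "\<And>i x y. i \<le> r \<Longrightarrow> x \<in> VH i \<Longrightarrow> y \<in> VH i \<Longrightarrow> s i x < s i y \<Longrightarrow> T i x < T i y"
    by metis
  define own where "own e = (SOME ix. fst ix \<le> r \<and> snd ix \<in> VH (fst ix) \<and> e = spk (fst ix) (hi (fst ix)) (snd ix))" for e
  define f where "f e = (if e \<in> Pall then T (fst (own e)) (snd (own e)) else f0 e)" for e
  have own: "own (spk i (hi i) x) = (i, x)" if "i \<le> r" "x \<in> VH i" for i x
    unfolding own_def by (rule some_equality) (use that in \<open>auto simp: spk_eq\<close>)
  have fP: "f (spk i (hi i) x) = T i x" if "i \<le> r" "x \<in> VH i" for i x
    using that own[OF that] by (auto simp: f_def Pall_def Pset_def)
  have Pall_E: "e \<in> Pall \<Longrightarrow> \<exists>i x. i \<le> r \<and> x \<in> VH i \<and> e = spk i (hi i) x" for e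
    by (auto simp: Pall_def Pset_def)
  have fsame: "\<exists>e'\<in>E. cls e' = cls e \<and> f e = f0 e'" if "e \<in> E" for e
  proof (cases "e \<in> Pall")
    case True
    then obtain i x where ix: "i \<le> r" "x \<in> VH i" "e = spk i (hi i) x" using Pall_E by blast
    then have "f e = T i x" using fP by simp
    moreover have "T i x \<in> f0 ` Pset i" using T(1)[OF ix(1)] ix(2) by (auto simp: bij_betw_def)
    ultimately obtain x' where x': "x' \<in> VH i" "f e = f0 (spk i (hi i) x')" by (auto simp: Pset_def)
    have "cls (spk i (hi i) x') = cls e" using ix cls_spk_hi by simp
    then show ?thesis using x' spkhi_E ix by blast
  next
    case False then show ?thesis using that by (auto simp: f_def)
  qed
  have fcls: "\<forall>e e'. e \<in> E \<longrightarrow> e' \<in> E \<longrightarrow> cls e < cls e' \<longrightarrow> f e < f e'"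
  proof (intro allI impI)
    fix e e' assume a: "e \<in> E" "e' \<in> E" "cls e < cls e'"
    obtain d where d: "d \<in> E" "cls d = cls e" "f e = f0 d" using fsame a by blast
    obtain d' where d': "d' \<in> E" "cls d' = cls e'" "f e' = f0 d'" using fsame a by blast
    show "f e < f e'" using f0m d d' a by auto
  qed
  have frange: "f ` E \<subseteq> {1..card E}"
  proof
    fix l assume "l \<in> f ` E"
    then obtain e where "e \<in> E" "l = f e" by auto
    then obtain d where "d \<in> E" "l = f0 d" using fsame by metis
    then show "l \<in> {1..card E}" using f0b by (auto simp: bij_betw_def)
  qed
  have finj: "inj_on f E"
  proof (rule inj_onI)
    fix e e' assume a: "e \<in> E" "e' \<in> E" "f e = f e'"
    show "e = e'"
    proof (cases "e \<in> Pall")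
      case True
      then obtain i x where ix: "i \<le> r" "x \<in> VH i" "e = spk i (hi i) x" using Pall_E by blast
      have "T i x \<in> f0 ` Pset i" using T(1)[OF ix(1)] ix(2) by (auto simp: bij_betw_def)
      then obtain z where z: "z \<in> VH i" "f e = f0 (spk i (hi i) z)" using fP ix by (auto simp: Pset_def)
      show ?thesis
      proof (cases "e' \<in> Pall")
        case True
        then obtain i' x' where ix': "i' \<le> r" "x' \<in> VH i'" "e' = spk i' (hi i') x'" using Pall_E by blast
        have "T i' x' \<in> f0 ` Pset i'" using T(1)[OF ix'(1)] ix'(2) by (auto simp: bij_betw_def)
        then obtain z' where z': "z' \<in> VH i'" "f e' = f0 (spk i' (hi i') z')" using fP ix' by (auto simp: Pset_def)
        have "spk i (hi i) z = spk i' (hi i') z'"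
          using f0inj z z' a spkhi_E ix ix' by (metis inj_onD)
        then have ii: "i = i'" by (simp add: spk_eq)
        then have "T i x = T i x'" using a fP ix ix' by simp
        then have "x = x'" using T(1)[OF ix(1)] ix ix' ii by (auto simp: bij_betw_def inj_on_def)
        then show ?thesis using ix ix' ii by simp
      next
        case False
        then have "f e' = f0 e'" by (simp add: f_def)
        then have "spk i (hi i) z = e'" using f0inj z a spkhi_E ix by (metis inj_onD)
        then have "e' \<in> Pall" using z ix by (auto simp: Pall_def Pset_def)
        then show ?thesis using False by simp
      qed
    next
      case False
      then have fe: "f e = f0 e" by (simp add: f_def)
      show ?thesis
      proof (cases "e' \<in> Pall")
        case True
        then obtain i x where ix: "i \<le> r" "x \<in> VH i" "e' = spk i (hi i) x" using Pall_E by blast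
        have "T i x \<in> f0 ` Pset i" using T(1)[OF ix(1)] ix(2) by (auto simp: bij_betw_def)
        then obtain z where z: "z \<in> VH i" "f e' = f0 (spk i (hi i) z)" using fP ix by (auto simp: Pset_def)
        then have "spk i (hi i) z = e" using f0inj a spkhi_E ix fe by (metis inj_onD)
        then have "e \<in> Pall" using z ix by (auto simp: Pall_def Pset_def)
        then show ?thesis using False by simp
      next
        case False
        then show ?thesis using fe a f0inj by (simp add: f_def inj_on_def)
      qed
    qed
  qed
  have fbij: "bij_betw f E {1..card E}"
  proof -
    have "card (f ` E) = card {1..card E}" using finj by (simp add: card_image)
    then have "f ` E = {1..card E}" using frange by (intro card_subset_eq) auto
    then show ?thesis using finj by (simp add: bij_betw_def)
  qed
  have wsplit: "(\<Sum>e\<in>inc (Inr (i,x)). f e) = s i x + T i x" if "i \<le> r" "x \<in> VH i" for i x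
  proof -
    have pin: "spk i (hi i) x \<in> inc (Inr (i,x))" using that spkhi_E by (auto simp: inc_def spk_def)
    have fin: "finite (inc (Inr (i,x)))" using finE finite_subset[of "inc (Inr (i,x))" E] by (auto simp: inc_def)
    have "(\<Sum>e\<in>inc (Inr (i,x)). f e) = f (spk i (hi i) x) + (\<Sum>e\<in>inc (Inr (i,x)) - {spk i (hi i) x}. f e)"
      using sum.remove[OF fin pin] by simp
    moreover have "(\<Sum>e\<in>inc (Inr (i,x)) - {spk i (hi i) x}. f e) = s i x"
      unfolding s_def
    proof (rule sum.cong[OF refl])
      fix e assume e: "e \<in> inc (Inr (i,x)) - {spk i (hi i) x}"
      have "e \<notin> Pall"
      proof
        assume "e \<in> Pall"
        then obtain i' x' where "i' \<le> r" "x' \<in> VH i'" "e = spk i' (hi i') x'" using Pall_E by blast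
        then show False using e by (auto simp: inc_def Inr_spk)
      qed
      then show "f e = f0 e" by (simp add: f_def)
    qed
    ultimately show ?thesis using fP that by simp
  qed
  have fH: "\<forall>i x y. i \<le> r \<longrightarrow> x \<in> VH i \<longrightarrow> y \<in> VH i \<longrightarrow> x \<noteq> y \<longrightarrow>
          (\<Sum>e\<in>inc (Inr (i,x)). f e) \<noteq> (\<Sum>e\<in>inc (Inr (i,y)). f e)"
  proof (intro allI impI)
    fix i x y assume a: "i \<le> r" "x \<in> VH i" "y \<in> VH i" "x \<noteq> y"
    have ne: "T i x \<noteq> T i y" using T(1)[OF a(1)] a by (auto simp: bij_betw_def inj_on_def)
    have "s i x + T i x \<noteq> s i y + T i y"
    proof (cases "T i x < T i y")
      case True
      then have "\<not> s i y < s i x" using T(2)[OF a(1) a(3) a(2)] by auto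
      then show ?thesis using True by simp
    next
      case False
      then have "T i y < T i x" using ne by simp
      then have "\<not> s i x < s i y" using T(2)[OF a(1) a(2) a(3)] by auto
      then show ?thesis using \<open>T i y < T i x\<close> by simp
    qed
    then show "(\<Sum>e\<in>inc (Inr (i,x)). f e) \<noteq> (\<Sum>e\<in>inc (Inr (i,y)). f e)"
      using wsplit a by simp
  qed
  show ?thesis using fbij fcls fH by blast
qed

end

theorem theorem1:
  fixes r :: nat and VH :: "nat \<Rightarrow> 'a set" and EH :: "nat \<Rightarrow> 'a set set"
  defines "V\<Gamma> \<equiv> corona_V (pan_V r) {0..r} VH"
      and "E\<Gamma> \<equiv> corona_E (pan_E r) {0..r} (pan_edge r) VH EH"
  assumes r3: "r \<ge> 3"
      and Hs: "\<And>i. i \<le> r \<Longrightarrow> simple_graph (VH i) (EH i)"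
      and Hc: "\<And>i. i \<le> r \<Longrightarrow> connected_graph (VH i) (EH i)"
      and H2: "\<And>i. i \<le> r \<Longrightarrow> card (VH i) \<ge> 2"
      and ord: "\<And>i. i < r \<Longrightarrow> card (VH i) \<le> card (VH (Suc i))"
      and a: "max_degree (VH 0) (EH 0) < min_degree (VH 1) (EH 1)"
      and b: "\<And>i. 1 \<le> i \<Longrightarrow> i \<le> r - 1 \<Longrightarrow>
                 max_degree (VH i) (EH i) \<le> min_degree (VH (Suc i)) (EH (Suc i))"
      and c: "\<And>i. i \<le> r \<Longrightarrow>
                 degree E\<Gamma> (Inl 0) \<le> Min ((\<lambda>x. degree E\<Gamma> (Inr (i, x))) ` VH i)"
      and d: "Max ((\<lambda>x. degree E\<Gamma> (Inr (r, x))) ` VH r) \<le> degree E\<Gamma> (Inl 1)"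
  shows "antimagic V\<Gamma> E\<Gamma>"
proof -
  have degs: "max_degree (VH i) (EH i) \<le> min_degree (VH (Suc i)) (EH (Suc i))" if "i < r" for i
  proof (cases "i = 0")
    case True then show ?thesis using a by simp
  next
    case False then show ?thesis using b[of i] that by simp
  qed
  interpret pc r VH EH
    by unfold_locales (use r3 Hs H2 ord degs in auto)
  have EE: "E\<Gamma> = E" by (simp add: E\<Gamma>_def E_def)
  have VV: "V\<Gamma> = V" by (simp add: V\<Gamma>_def V_def)
  have dg: "degree E\<Gamma> v = card (inc v)" for v by (simp add: degree_def inc_def EE)
  obtain f where fb: "bij_betw f E {1..card E}"
    and fc: "\<forall>e e'. e \<in> E \<longrightarrow> e' \<in> E \<longrightarrow> cls e < cls e' \<longrightarrow> f e < f e'"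
    and fh: "\<forall>i x y. i \<le> r \<longrightarrow> x \<in> VH i \<longrightarrow> y \<in> VH i \<longrightarrow> x \<noteq> y \<longrightarrow>
          (\<Sum>e\<in>inc (Inr (i,x)). f e) \<noteq> (\<Sum>e\<in>inc (Inr (i,y)). f e)"
    using exists_f by blast
  have hc: "card (inc (Inl 0)) \<le> card (inc (Inr (i,x)))" if "i \<le> r" "x \<in> VH i" for i x
  proof -
    have "Min ((\<lambda>x. degree E\<Gamma> (Inr (i, x))) ` VH i) \<le> degree E\<Gamma> (Inr (i, x))"
      using finVH[OF that(1)] that(2) by simp
    then show ?thesis using c[OF that(1)] by (simp add: dg)
  qed
  have hd: "card (inc (Inr (r,x))) \<le> card (inc (Inl 1))" if "x \<in> VH r" for x
  proof -
    have "degree E\<Gamma> (Inr (r, x)) \<le> Max ((\<lambda>x. degree E\<Gamma> (Inr (r, x))) ` VH r)"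
      using finVH[of r] that by simp
    then show ?thesis using d by (simp add: dg)
  qed
  interpret pc_lab r VH EH f
    by unfold_locales (use fc fh hc hd in auto)
  show ?thesis unfolding VV EE by (rule antimagic_VE) (rule fb)
qed

end
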